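(* Let $v,a,b,c\in\mathbb{C}$ with $\Re(v)<1$, $\Re(c)>0$, and $\Re(vc+a+b)>0$, $\Re(vc+a-b)>0$, $\Re(vc-a+b)>0$, $\Re(vc-a-b)>0$. Fix a square root $\sqrt{a^2+b^2}$ and put $\lambda_1=\frac v2-\frac{\sqrt{a^2+b^2}}{2c}$, $\lambda_2=\frac v2+\frac{\sqrt{a^2+b^2}}{2c}$, $\sigma_3=\frac v2-\frac{a}{2c}-\frac{b}{2c}$, $\sigma_4=\frac v2-\frac{a}{2c}+\frac{b}{2c}$, $\sigma_5=\frac v2+\frac{a}{2c}+\frac{b}{2c}$, $\sigma_6=\frac v2+\frac{a}{2c}-\frac{b}{2c}$, and $P=(vc-a-b)(vc+a+b)(vc-a+b)(vc+a-b)$. Assume $\frac v2,\lambda_1,\lambda_2\notin\mathbb{Z}_0^-$ and $1+\sigma_j\notin\mathbb{Z}_0^-$ for $j=3,4,5,6$. Then $$ {}_8F_7\!\left(\begin{matrix}v,\ 1+\frac v2,\ 1+\lambda_1,\ 1+\lambda_2,\ \sigma_3,\ \sigma_4,\ \sigma_5,\ \sigma_6\\ \frac v2,\ \lambda_1,\ \lambda_2,\ 1+\sigma_3,\ 1+\sigma_4,\ 1+\sigma_5,\ 1+\sigma_6\end{matrix};\,1\right) =\frac{P}{8\,(v^3c^4-a^2vc^2-b^2vc^2)\,\Gamma(v)}\left[\Gamma(\sigma_5)\Gamma(\sigma_3)\frac{\cos\!\big(\frac{(a+b)\pi}{2c}\big)}{\cos(\frac{v\pi}{2})}+\Gamma(\sigma_6)\Gamma(\sigma_4)\frac{\cos\!\big(\frac{(a-b)\pi}{2c}\big)}{\cos(\frac{v\pi}{2})}\right].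 $$
   Context: $\mathbb{Z}_0^-=\{0,-1,-2,\dots\}$. The Pochhammer symbol is $(\lambda)_0=1$, $(\lambda)_n=\lambda(\lambda+1)\cdots(\lambda+n-1)$ for $n\ge1$. The generalized hypergeometric series is ${}_pF_q\!\left(\begin{matrix}\alpha_1,\dots,\alpha_p\\ \beta_1,\dots,\beta_q\end{matrix};z\right)=\sum_{n=0}^\infty\frac{(\alpha_1)_n\cdots(\alpha_p)_n}{(\beta_1)_n\cdots(\beta_q)_n}\frac{z^n}{n!}$ (with no $\beta_j\in\mathbb{Z}_0^-$); when $p=q+1$ and $z=1$ it converges if $\Re(\sum\beta_j-\sum\alpha_i)>0$. $\Gamma$ is Euler's gamma function. *)

theory Defs
  imports "HOL-Analysis.Analysis"
begin

definition hyp_term :: "complex list \<Rightarrow> complex list \<Rightarrow> complex \<Rightarrow> nat \<Rightarrow> complex" where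
  "hyp_term as bs z n =
     (\<Prod>a\<leftarrow>as. pochhammer a n) / (\<Prod>b\<leftarrow>bs. pochhammer b n) * z ^ n / fact n"

definition hypergeom :: "complex list \<Rightarrow> complex list \<Rightarrow> complex \<Rightarrow> complex" where
  "hypergeom as bs z = (\<Sum>n. hyp_term as bs z n)"

end

theory Submission
  imports Defs
begin


lemma c_bound:
  fixes v :: complex
  obtains C where "C > 0" "\<And>n. n \<ge> 1 \<Longrightarrow> norm (pochhammer v (Suc n) / fact (Suc n)) \<le> C * real n powr (Re v - 1)"
proof -
  have "Bseq (rGamma_series v)" using rGamma_series_LIMSEQ[of v] by (rule convergent_imp_Bseq[OF convergentI])
  then obtain K where K: "K > 0" "\<And>n. norm (rGamma_series v n) \<le> K" by (auto elim: BseqE)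
  have "norm (pochhammer v (Suc n) / fact (Suc n)) \<le> K * real n powr (Re v - 1)" if n: "n \<ge> 1" for n
  proof -
    have pos: "real n > 0" using n by simp
    have ne: "norm (exp (v * of_real (ln (real n)))) = real n powr Re v"
      using pos by (simp add: powr_def)
    have eq: "norm (rGamma_series v n) = norm (pochhammer v (Suc n)) / (fact n * real n powr Re v)"
      unfolding rGamma_series_def using ne by (simp add: norm_divide norm_mult)
    have "norm (pochhammer v (Suc n)) / (fact n * real n powr Re v) \<le> K" using K(2)[of n] unfolding eq .
    hence A: "norm (pochhammer v (Suc n)) \<le> K * (fact n * real n powr Re v)"
      using pos by (simp add: divide_le_eq mult.commute)
    have "norm (pochhammer v (Suc n) / fact (Suc n)) = norm (pochhammer v (Suc n)) / (real (Suc n) * fact n)"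
      by (simp add: norm_divide norm_mult del: of_nat_Suc)
    also have "\<dots> \<le> K * (fact n * real n powr Re v) / (real (Suc n) * fact n)"
      by (intro divide_right_mono A) auto
    also have "\<dots> = K * real n powr Re v / real (Suc n)" by simp
    also have "\<dots> \<le> K * real n powr Re v / real n"
      using pos K by (intro divide_left_mono) auto
    also have "\<dots> = K * real n powr (Re v - 1)"
      using pos by (simp add: powr_diff)
    finally show ?thesis .
  qed
  thus ?thesis using that K by blast
qed

lemma c_tendsto0:
  fixes v :: complex assumes "Re v < 1"
  shows "(\<lambda>n. pochhammer v n / fact n) \<longlonglongrightarrow> 0"
proof -
  obtain C where C: "C > 0" "\<And>n. n \<ge> 1 \<Longrightarrow> norm (pochhammer v (Suc n) / fact (Suc n)) \<le> C * real n powr (Re v - 1)"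
    using c_bound[of v] by blast
  have "(\<lambda>n. pochhammer v (Suc n) / fact (Suc n)) \<longlonglongrightarrow> 0"
  proof (rule Lim_null_comparison)
    show "eventually (\<lambda>n. norm (pochhammer v (Suc n) / fact (Suc n)) \<le> C * real n powr (Re v - 1)) sequentially"
      using eventually_ge_at_top[of "1::nat"] by eventually_elim (rule C(2))
    have "(\<lambda>n. real n powr (Re v - 1)) \<longlonglongrightarrow> 0"
      by (intro tendsto_neg_powr filterlim_real_sequentially) (use assms in simp)
    from tendsto_mult_right_zero[OF this, of C] show "(\<lambda>n. C * real n powr (Re v - 1)) \<longlonglongrightarrow> 0" .
  qed
  thus ?thesis by (rule LIMSEQ_imp_Suc)
qed

lemma c_summable:
  fixes v :: complex assumes "Re v < 1"
  shows "summable (\<lambda>n. norm (pochhammer v n / fact n) / real (Suc n))"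
proof -
  obtain C where C: "C > 0" "\<And>n. n \<ge> 1 \<Longrightarrow> norm (pochhammer v (Suc n) / fact (Suc n)) \<le> C * real n powr (Re v - 1)"
    using c_bound[of v] by blast
  have "summable (\<lambda>n. norm (pochhammer v (Suc n) / fact (Suc n)) / real (Suc (Suc n)))"
  proof (rule summable_comparison_test_ev)
    show "eventually (\<lambda>n. norm (norm (pochhammer v (Suc n) / fact (Suc n)) / real (Suc (Suc n))) \<le> C * real n powr (Re v - 2)) sequentially"
      using eventually_ge_at_top[of "1::nat"]
    proof eventually_elim
      case (elim n)
      have pos: "real n > 0" using elim by simp
      have "norm (norm (pochhammer v (Suc n) / fact (Suc n)) / real (Suc (Suc n)))
          = norm (pochhammer v (Suc n) / fact (Suc n)) / real (Suc (Suc n))" by simp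
      also have "\<dots> \<le> C * real n powr (Re v - 1) / real (Suc (Suc n))"
        by (intro divide_right_mono C(2) elim) auto
      also have "\<dots> \<le> C * real n powr (Re v - 1) / real n"
        using pos C by (intro divide_left_mono) auto
      also have "\<dots> = C * real n powr (Re v - 2)"
        using pos by (simp add: powr_diff power2_eq_square)
      finally show ?case .
    qed
    show "summable (\<lambda>n. C * real n powr (Re v - 2))"
      by (intro summable_mult) (use assms in \<open>simp add: summable_real_powr_iff\<close>)
  qed
  thus ?thesis by (subst summable_Suc_iff[symmetric])
qed

lemma norm_add_nat_ge:
  fixes w :: complex assumes "Re w \<ge> 0"
  shows "norm w \<le> norm (w + of_nat m)"
proof -
  have a: "(norm w)^2 = (Re w)^2 + (Im w)^2" by (simp add: cmod_power2)
  have b: "(norm (w + of_nat m))^2 = (Re w + real m)^2 + (Im w)^2" by (simp add: cmod_power2)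
  have "(norm w)^2 \<le> (norm (w + of_nat m))^2"
    unfolding a b using power_mono[of "Re w" "Re w + real m" 2] assms by simp
  thus ?thesis by (rule power2_le_imp_le) simp
qed

lemma norm_ge_Re_plus:
  fixes w :: complex
  shows "Re w + real m \<le> norm (w + of_nat m)"
  using complex_Re_le_cmod[of "w + of_nat m"] by simp

lemma norm_ge_Re_plus2:
  fixes w :: complex
  shows "Re w + real k + real m \<le> norm (w + of_nat k + of_nat m)"
  using complex_Re_le_cmod[of "w + of_nat k + of_nat m"] by simp

lemma poch_ratio_bound:
  fixes s :: complex assumes "Re s > 0"
  shows "norm (pochhammer s (Suc n) / pochhammer (s + 1 + of_nat m) (Suc n))
           \<le> norm s / norm (s + of_nat (Suc n) + of_nat m)"
proof (induction n)
  case 0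
  show ?case by (simp add: norm_divide add_ac)
next
  case (Suc n)
  let ?d = "s + 1 + of_nat m"
  have eq: "pochhammer s (Suc (Suc n)) / pochhammer ?d (Suc (Suc n))
     = (pochhammer s (Suc n) / pochhammer ?d (Suc n)) * ((s + of_nat (Suc n)) / (?d + of_nat (Suc n)))"
    by (simp only: pochhammer_Suc[of _ "Suc n"] times_divide_times_eq)
  have "norm (s + of_nat (Suc n)) \<le> norm (s + of_nat (Suc n) + of_nat m)"
    by (rule norm_add_nat_ge) (use assms in simp)
  have pos: "norm (s + of_nat (Suc n) + of_nat m) > 0"
    using norm_ge_Re_plus2[of s "Suc n" m] assms by linarith
  have pos2: "norm (s + of_nat (Suc (Suc n)) + of_nat m) > 0"
    using norm_ge_Re_plus2[of s "Suc (Suc n)" m] assms by linarith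
  have "norm (pochhammer s (Suc (Suc n)) / pochhammer ?d (Suc (Suc n)))
      = norm (pochhammer s (Suc n) / pochhammer ?d (Suc n)) * (norm (s + of_nat (Suc n)) / norm (?d + of_nat (Suc n)))"
    unfolding eq by (simp add: norm_mult norm_divide)
  also have "\<dots> \<le> norm s / norm (s + of_nat (Suc n) + of_nat m) * (norm (s + of_nat (Suc n)) / norm (?d + of_nat (Suc n)))"
    by (intro mult_right_mono Suc.IH) auto
  also have "\<dots> \<le> norm s / norm (s + of_nat (Suc n) + of_nat m) * (norm (s + of_nat (Suc n) + of_nat m) / norm (?d + of_nat (Suc n)))"
    by (intro mult_left_mono divide_right_mono) (fact, simp, simp)
  also have "\<dots> = norm s / norm (?d + of_nat (Suc n))" using pos by simp
  also have "?d + of_nat (Suc n) = s + of_nat (Suc (Suc n)) + of_nat m" by (simp add: algebra_simps)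
  finally show ?case .
qed



lemma poch_nz_Re:
  fixes z :: complex assumes "Re z > 0" shows "pochhammer z n \<noteq> 0"
proof
  assume "pochhammer z n = 0"
  then obtain k where "z = - of_nat k" by (auto simp: pochhammer_eq_0_iff)
  with assms show False by simp
qed

lemma alg_aux:
  fixes ra rb rc f Eb Ec m A B C :: complex
  assumes "rb \<noteq> 0" "rc \<noteq> 0" "f \<noteq> 0" "Eb \<noteq> 0" "Ec \<noteq> 0" "m \<noteq> 0" "A \<noteq> 0" "B \<noteq> 0" "C \<noteq> 0"
  shows "ra * f * (Eb * Ec / m) / A * f / (rb * f * Eb / B * (rc * f * Ec / C)) = ra / (rb * rc) * ((B/m) * (C/m) / (A/m))"
  using assms by (simp add: field_simps)

lemma prod_limit:
  fixes a b c :: complex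
  assumes b: "b \<notin> \<int>\<^sub>\<le>\<^sub>0" and c: "c \<notin> \<int>\<^sub>\<le>\<^sub>0" and abc: "a = b + c - 1"
  shows "(\<lambda>m. pochhammer a m * fact m / (pochhammer b m * pochhammer c m)) \<longlonglongrightarrow> Gamma b * Gamma c * rGamma a"
proof -
  define E where "E z m = exp (z * of_real (ln (real m)))" for z :: complex and m :: nat
  define Q where "Q m = (1 + b / of_nat m) * (1 + c / of_nat m) / (1 + a / of_nat m)" for m :: nat
  have Qlim: "Q \<longlonglongrightarrow> (1 + b * 0) * (1 + c * 0) / (1 + a * 0)"
    unfolding Q_def divide_inverse
    by (intro tendsto_intros lim_inverse_n) simp_all
  have lim: "(\<lambda>m. rGamma_series a m / (rGamma_series b m * rGamma_series c m) * Q m)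
      \<longlonglongrightarrow> rGamma a / (rGamma b * rGamma c) * ((1 + b * 0) * (1 + c * 0) / (1 + a * 0))"
    using b c by (intro tendsto_intros Qlim) (auto simp: rGamma_eq_zero_iff)
  have "rGamma a / (rGamma b * rGamma c) * ((1 + b * 0) * (1 + c * 0) / (1 + a * 0)) = Gamma b * Gamma c * rGamma a"
    by (simp add: rGamma_inverse_Gamma field_simps)
  note lim = lim[unfolded this]
  obtain N :: nat where N: "real N > norm a" using reals_Archimedean2 by blast
  have ev: "eventually (\<lambda>m. rGamma_series a m / (rGamma_series b m * rGamma_series c m) * Q m
      = pochhammer a m * fact m / (pochhammer b m * pochhammer c m)) sequentially"
    using eventually_gt_at_top[of "N"]
  proof eventually_elim
    case (elim m)
    have m0: "m > 0" using elim by simp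
    have mpos: "real m > norm a" using elim N by linarith
    have am: "a + of_nat m \<noteq> 0"
    proof
      assume "a + of_nat m = 0"
      hence "a = - of_nat m" by (simp add: eq_neg_iff_add_eq_0)
      hence "norm a = real m" by simp
      with mpos show False by simp
    qed
    have bm: "b + of_nat m \<noteq> 0" using b plus_of_nat_eq_0_imp by blast
    have cm: "c + of_nat m \<noteq> 0" using c plus_of_nat_eq_0_imp by blast
    have pz: "pochhammer z m = rGamma_series z m * fact m * E z m / (z + of_nat m)"
      if "z + of_nat m \<noteq> 0" for z
    proof -
      have "rGamma_series z m * fact m * E z m = pochhammer z (Suc m)"
        unfolding rGamma_series_def E_def by simp
      also have "\<dots> = pochhammer z m * (z + of_nat m)" by (rule pochhammer_Suc)
      finally show ?thesis using that by (simp add: field_simps)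
    qed
    have rb: "rGamma_series b m \<noteq> 0" using b pochhammer_eq_0_imp_nonpos_Int
      unfolding rGamma_series_def by auto
    have rc: "rGamma_series c m \<noteq> 0" using c pochhammer_eq_0_imp_nonpos_Int
      unfolding rGamma_series_def by auto
    have Enz: "E z m \<noteq> 0" for z unfolding E_def by simp
    have Eq: "E a m = E b m * E c m / of_nat m"
    proof -
      have "E a m * of_nat m = E a m * exp (of_real (ln (real m)))"
        using m0 by (simp add: exp_of_real)
      also have "\<dots> = E b m * E c m" unfolding E_def abc
        by (simp add: exp_add[symmetric] algebra_simps)
      finally show ?thesis using m0 by (simp add: field_simps)
    qed
    have m0': "(of_nat m :: complex) \<noteq> 0" using m0 by simp
    show ?case
    proof -
      have q: "1 + z / of_nat m = (z + of_nat m) / of_nat m" for z :: complex using m0' by (simp add: field_simps)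
      show ?thesis
        unfolding pz[OF am] pz[OF bm] pz[OF cm] Eq Q_def q
        by (rule alg_aux[symmetric]) (use rb rc Enz am bm cm m0' in auto)
    qed
  qed
  show ?thesis by (rule Lim_transform_eventually[OF lim ev])
qed



lemma Re_pos_notin:
  fixes z :: complex assumes "Re z > 0" shows "z \<notin> \<int>\<^sub>\<le>\<^sub>0"
proof
  assume "z \<in> \<int>\<^sub>\<le>\<^sub>0"
  then obtain n where n: "n \<le> 0" "z = of_int n" by (auto elim: nonpos_Ints_cases)
  hence "Re z = of_int n" by simp
  with n assms show False by simp
qed

lemma min_bound:
  fixes r :: real assumes "r > 0"
  shows "min 1 r * (real n + 1) \<le> r + real n"
proof (cases "r \<ge> 1")
  case True thus ?thesis by simp
next
  case False
  hence "min 1 r = r" by simp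
  moreover have "r * real n \<le> real n" using False assms by (intro mult_left_le_one_le) auto
  ultimately show ?thesis by (simp add: algebra_simps)
qed

lemma ident_aux:
  fixes D N X v s :: complex
  assumes "D + N \<noteq> 0" "1 + N \<noteq> 0"
  shows "D * (D - v - s) * X - (D - v) * (D - s) * (X * (D / (D + N)))
       = D * N * X - D * (1 + N) * (X * ((v + N) * (s + N) / ((1 + N) * (D + N))))"
proof -
  have e2: "D * (1 + N) * (X * ((v + N) * (s + N) / ((1 + N) * (D + N)))) = D * X * ((v + N) * (s + N)) / (D + N)"
  proof -
    have gen: "\<And>P Q W. P \<noteq> 0 \<Longrightarrow> Q \<noteq> 0 \<Longrightarrow> D * P * (X * (W / (P * Q))) = D * X * W / Q"
      by (simp add: field_simps)
    show ?thesis by (rule gen[OF assms(2) assms(1)])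
  qed
  have e1: "(D - v) * (D - s) * (X * (D / (D + N))) = (D - v) * (D - s) * X * D / (D + N)" by simp
  have L: "D * (D - v - s) * X - (D - v) * (D - s) * (X * (D / (D + N)))
      = (D * (D - v - s) * X * (D + N) - (D - v) * (D - s) * X * D) / (D + N)"
    unfolding e1 using assms(1) by (simp add: diff_divide_distrib)
  have R: "D * N * X - D * (1 + N) * (X * ((v + N) * (s + N) / ((1 + N) * (D + N))))
      = (D * N * X * (D + N) - D * X * ((v + N) * (s + N))) / (D + N)"
    unfolding e2 using assms(1) by (simp add: diff_divide_distrib)
  have "D * (D - v - s) * X * (D + N) - (D - v) * (D - s) * X * D = D * N * X * (D + N) - D * X * ((v + N) * (s + N))"
    by (simp add: algebra_simps)
  thus ?thesis unfolding L R by simp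
qed

lemma gauss_core:
  fixes v s :: complex assumes hv: "Re v < 1" and hs: "Re s > 0"
  shows "(\<lambda>n. pochhammer v n / fact n / (of_nat n + s)) sums (Gamma s * Gamma (1 - v) * rGamma (s + 1 - v))"
proof -
  define c where "c n = pochhammer v n / fact n" for n
  define d where "d m = s + 1 + of_nat m" for m :: nat
  define T where "T m n = c n * (pochhammer s n / pochhammer (d m) n)" for m n
  define B where "B = norm s / min 1 (Re s)"
  define M where "M n = norm (c n) * B / real (Suc n)" for n
  define S where "S m = suminf (T m)" for m
  have s0: "s \<noteq> 0" using hs by auto
  have Red: "Re (d m) > 0" for m using hs by (simp add: d_def)
  have dnz: "pochhammer (d m) n \<noteq> 0" for m n by (rule poch_nz_Re[OF Red])
  have dn0: "d m + of_nat n \<noteq> 0" for m n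
  proof
    assume "d m + of_nat n = 0"
    hence "Re (d m + of_nat n) = 0" by simp
    with Red[of m] show False by simp
  qed
  have minpos: "min 1 (Re s) > 0" using hs by simp
  have Bge: "B \<ge> 1"
  proof -
    have "min 1 (Re s) \<le> norm s" using complex_Re_le_cmod[of s] by linarith
    thus ?thesis unfolding B_def using minpos by simp
  qed
  have Tb1: "norm (T m (Suc k)) \<le> norm (c (Suc k)) * (norm s / (Re s + real (Suc k) + real m))" for m k
  proof -
    have "norm (T m (Suc k)) = norm (c (Suc k)) * norm (pochhammer s (Suc k) / pochhammer (d m) (Suc k))"
      unfolding T_def by (rule norm_mult)
    also have "\<dots> \<le> norm (c (Suc k)) * (norm s / norm (s + of_nat (Suc k) + of_nat m))"
      unfolding d_def by (intro mult_left_mono poch_ratio_bound hs) simp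
    also have "\<dots> \<le> norm (c (Suc k)) * (norm s / (Re s + real (Suc k) + real m))"
    proof -
      have p1: "0 < Re s + real (Suc k) + real m" using hs by simp
      have p2: "Re s + real (Suc k) + real m \<le> norm (s + of_nat (Suc k) + of_nat m)"
        by (rule norm_ge_Re_plus2)
      show ?thesis using p1 p2 by (intro mult_left_mono divide_left_mono mult_pos_pos) auto
    qed
    finally show ?thesis .
  qed
  have Tbound: "norm (T m n) \<le> M n" for m n
  proof (cases n)
    case 0
    thus ?thesis using Bge by (simp add: T_def M_def c_def)
  next
    case (Suc k)
    have "norm s / (Re s + real (Suc k) + real m) \<le> norm s / (Re s + real (Suc k))"
      using hs by (intro divide_left_mono) auto
    also have "\<dots> \<le> norm s / (min 1 (Re s) * (real (Suc k) + 1))"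
      using min_bound[OF hs, of "Suc k"] hs minpos by (intro divide_left_mono) auto
    also have "\<dots> = B / real (Suc (Suc k))" unfolding B_def by (simp add: field_simps)
    finally have "norm (T m n) \<le> norm (c n) * (B / real (Suc n))"
      using Tb1[of m k] Suc by (meson mult_left_mono norm_ge_zero order_trans)
    thus ?thesis unfolding M_def by simp
  qed
  have sumM: "summable M"
    using summable_mult2[OF c_summable[OF hv], of B] unfolding M_def c_def by (simp add: mult_ac)
  have sumT: "summable (T m)" for m
    by (rule summable_comparison_test[OF _ sumM]) (use Tbound in auto)
  have cSuc: "c (Suc n) = c n * ((v + of_nat n) / of_nat (Suc n))" for n
    unfolding c_def by (simp add: pochhammer_Suc field_simps del: of_nat_Suc)
  have h1: "T (Suc m) n = T m n * (d m / (d m + of_nat n))" for m n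
  proof -
    have "pochhammer (d m) (Suc n) = d m * pochhammer (d m + 1) n" by (rule pochhammer_rec)
    moreover have "pochhammer (d m) (Suc n) = pochhammer (d m) n * (d m + of_nat n)" by (rule pochhammer_Suc)
    moreover have "d (Suc m) = d m + 1" unfolding d_def by simp
    ultimately have "pochhammer (d (Suc m)) n = pochhammer (d m) n * (d m + of_nat n) / d m"
      using Red[of m] by (auto simp: field_simps)
    thus ?thesis unfolding T_def using dnz[of m n] dn0[of m n] Red[of m]
      by (auto simp: field_simps)
  qed
  have h2: "T m (Suc n) = T m n * ((v + of_nat n) * (s + of_nat n) / (of_nat (Suc n) * (d m + of_nat n)))" for m n
    unfolding T_def cSuc pochhammer_Suc using dnz[of m n] dn0[of m n]
    by (simp add: field_simps del: of_nat_Suc)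
  have contig: "d m * (d m - v - s) * S m = (d m - v) * (d m - s) * S (Suc m)" for m
  proof -
    define U where "U n = d m * of_nat n * T m n" for n
    have Ulim: "U \<longlonglongrightarrow> 0"
    proof (rule Lim_null_comparison)
      show "eventually (\<lambda>n. norm (U n) \<le> norm (d m) * norm s * norm (c n)) sequentially"
      proof (intro always_eventually allI)
        fix n
        show "norm (U n) \<le> norm (d m) * norm s * norm (c n)"
        proof (cases n)
          case 0 thus ?thesis by (simp add: U_def)
        next
          case (Suc k)
          have "norm (U n) = norm (d m) * real n * norm (T m (Suc k))"
            unfolding U_def Suc norm_mult norm_of_nat ..
          also have "\<dots> \<le> norm (d m) * real n * (norm (c (Suc k)) * (norm s / (Re s + real (Suc k) + real m)))"
            by (intro mult_left_mono Tb1) auto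
          also have "\<dots> \<le> norm (d m) * norm s * norm (c n)"
          proof -
            have "real n / (Re s + real (Suc k) + real m) \<le> 1" using hs Suc by simp
            hence "real n * (norm s / (Re s + real (Suc k) + real m)) \<le> norm s"
              by (metis mult.commute mult_left_le times_divide_eq_right norm_ge_zero)
            hence "norm (d m) * (norm (c (Suc k)) * (real n * (norm s / (Re s + real (Suc k) + real m))))
                 \<le> norm (d m) * (norm (c (Suc k)) * norm s)"
              by (intro mult_left_mono) auto
            thus ?thesis using Suc by (simp add: mult_ac)
          qed
          finally show ?thesis .
        qed
      qed
      have "(\<lambda>n. norm (c n)) \<longlonglongrightarrow> 0"
        using c_tendsto0[OF hv] unfolding c_def by (simp add: tendsto_norm_zero)
      from tendsto_mult_right_zero[OF this, of "norm (d m) * norm s"]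
      show "(\<lambda>n. norm (d m) * norm s * norm (c n)) \<longlonglongrightarrow> 0" .
    qed
    have tel: "(\<lambda>n. U n - U (Suc n)) sums (U 0 - 0)" by (rule telescope_sums'[OF Ulim])
    have ident: "d m * (d m - v - s) * T m n - (d m - v) * (d m - s) * T (Suc m) n = U n - U (Suc n)" for n
    proof -
      have "1 + of_nat n \<noteq> (0::complex)" by (metis of_nat_Suc of_nat_neq_0)
      note X = ident_aux[OF dn0[of m n] this]
      show ?thesis unfolding U_def h1 h2 of_nat_Suc by (rule X)
    qed
    have s1: "(\<lambda>n. d m * (d m - v - s) * T m n - (d m - v) * (d m - s) * T (Suc m) n)
            sums (d m * (d m - v - s) * S m - (d m - v) * (d m - s) * S (Suc m))"
      unfolding S_def by (intro sums_diff sums_mult summable_sums sumT)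
    have s2: "(\<lambda>n. d m * (d m - v - s) * T m n - (d m - v) * (d m - s) * T (Suc m) n) sums 0"
      using tel unfolding ident by (simp add: U_def)
    from sums_unique2[OF s1 s2] show ?thesis by simp
  qed
  define R where "R k = (d k - v) * (d k - s) / (d k * (d k - v - s))" for k
  have dvs: "d k - v - s \<noteq> 0" for k
  proof
    assume "d k - v - s = 0"
    hence "Re (d k - v - s) = 0" by simp
    with hv show False by (simp add: d_def)
  qed
  have dk0: "d k \<noteq> 0" for k using Red[of k] by auto
  have SR: "S k = R k * S (Suc k)" for k
  proof -
    have gen: "\<And>X Y a b :: complex. X \<noteq> 0 \<Longrightarrow> X * a = Y * b \<Longrightarrow> a = Y / X * b"
      by (simp add: field_simps)
    have "d k * (d k - v - s) \<noteq> 0" using dvs[of k] dk0[of k] by simp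
    from gen[OF this contig[of k]] show ?thesis unfolding R_def .
  qed
  have Sprod: "S 0 = (\<Prod>k<m. R k) * S m" for m
  proof (induction m)
    case 0 thus ?case by simp
  next
    case (Suc m) thus ?case using SR[of m] by (simp add: mult_ac)
  qed
  have Pform: "(\<Prod>k<m. R k) = pochhammer (s + 1 - v) m * fact m / (pochhammer (s + 1) m * pochhammer (1 - v) m)" for m
  proof (induction m)
    case 0 thus ?case by simp
  next
    case (Suc m)
    have p1: "pochhammer (s + 1) m \<noteq> 0" by (rule poch_nz_Re) (use hs in simp)
    have p2: "pochhammer (1 - v) m \<noteq> 0" by (rule poch_nz_Re) (use hv in simp)
    have e1: "d m - v = s + 1 - v + of_nat m" "d m - s = of_nat (Suc m)" "d m = s + 1 + of_nat m"
      "d m - v - s = 1 - v + of_nat m" unfolding d_def by simp_all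
    have "(\<Prod>k<Suc m. R k) = (\<Prod>k<m. R k) * R m" by simp
    also have "\<dots> = pochhammer (s + 1 - v) m * fact m / (pochhammer (s + 1) m * pochhammer (1 - v) m)
        * ((s + 1 - v + of_nat m) * of_nat (Suc m) / ((s + 1 + of_nat m) * (1 - v + of_nat m)))"
    proof -
      have Rm: "R m = (s + 1 - v + of_nat m) * of_nat (Suc m) / ((s + 1 + of_nat m) * (1 - v + of_nat m))"
        unfolding R_def d_def by (simp add: algebra_simps)
      show ?thesis unfolding Suc.IH Rm ..
    qed
    also have "\<dots> = (pochhammer (s + 1 - v) m * (s + 1 - v + of_nat m)) * (fact m * of_nat (Suc m))
        / ((pochhammer (s + 1) m * (s + 1 + of_nat m)) * (pochhammer (1 - v) m * (1 - v + of_nat m)))"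
      by (simp add: field_simps)
    also have "\<dots> = pochhammer (s + 1 - v) (Suc m) * fact (Suc m) / (pochhammer (s + 1) (Suc m) * pochhammer (1 - v) (Suc m))"
      by (simp only: pochhammer_Suc fact_Suc of_nat_mult) (simp add: mult_ac)
    finally show ?case .
  qed
  have Slim: "S \<longlonglongrightarrow> 1"
  proof -
    define b where "b k = (if k = 0 then 1 else (0::complex))" for k :: nat
    have lim: "(\<lambda>m. T m k) \<longlonglongrightarrow> b k" for k
    proof (cases k)
      case 0 thus ?thesis by (simp add: T_def b_def c_def)
    next
      case (Suc j)
      have "(\<lambda>m. T m (Suc j)) \<longlonglongrightarrow> 0"
      proof (rule Lim_null_comparison)
        show "eventually (\<lambda>m. norm (T m (Suc j)) \<le> norm (c (Suc j)) * norm s * inverse (real (Suc m))) sequentially"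
        proof (intro always_eventually allI)
          fix m
          have "norm s / (Re s + real (Suc j) + real m) \<le> norm s / real (Suc m)"
            using hs by (intro divide_left_mono) auto
          hence "norm (c (Suc j)) * (norm s / (Re s + real (Suc j) + real m)) \<le> norm (c (Suc j)) * (norm s / real (Suc m))"
            by (intro mult_left_mono) auto
          from order_trans[OF Tb1[of m j] this]
          show "norm (T m (Suc j)) \<le> norm (c (Suc j)) * norm s * inverse (real (Suc m))"
            by (simp only: divide_inverse mult.assoc)
        qed
        from tendsto_mult_right_zero[OF LIMSEQ_inverse_real_of_nat, of "norm (c (Suc j)) * norm s"]
        show "(\<lambda>m. norm (c (Suc j)) * norm s * inverse (real (Suc m))) \<longlonglongrightarrow> 0" .
      qed
      thus ?thesis using Suc by (simp add: b_def)
    qed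
    have bsum: "suminf b = 1"
      using sums_single[of 0 "\<lambda>_. (1::complex)"] unfolding b_def[abs_def] by (simp add: sums_iff)
    have "((\<lambda>m. suminf (\<lambda>k. T m k)) \<longlonglongrightarrow> suminf b)"
      using tannerys_theorem[where a="\<lambda>k m. T m k" and b=b and M=M and F=sequentially] lim Tbound sumM
      by (auto intro: always_eventually)
    thus ?thesis unfolding S_def bsum by simp
  qed
  have Glim: "(\<lambda>m. (\<Prod>k<m. R k) * S m) \<longlonglongrightarrow> Gamma (s + 1) * Gamma (1 - v) * rGamma (s + 1 - v) * 1"
    unfolding Pform
  proof (intro tendsto_mult Slim)
    show "(\<lambda>m. pochhammer (s + 1 - v) m * fact m / (pochhammer (s + 1) m * pochhammer (1 - v) m))
        \<longlonglongrightarrow> Gamma (s + 1) * Gamma (1 - v) * rGamma (s + 1 - v)"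
    proof (rule prod_limit)
      show "s + 1 \<notin> \<int>\<^sub>\<le>\<^sub>0" using hs by (intro Re_pos_notin) simp
      show "1 - v \<notin> \<int>\<^sub>\<le>\<^sub>0" using hv by (intro Re_pos_notin) simp
    qed simp
  qed
  have S0: "S 0 = Gamma (s + 1) * Gamma (1 - v) * rGamma (s + 1 - v)"
  proof -
    have "(\<lambda>m. (\<Prod>k<m. R k) * S m) = (\<lambda>m. S 0)" using Sprod by simp
    with Glim have "(\<lambda>m. S 0) \<longlonglongrightarrow> Gamma (s + 1) * Gamma (1 - v) * rGamma (s + 1 - v)" by simp
    thus ?thesis by (simp add: LIMSEQ_const_iff)
  qed
  have T0: "T 0 n = s * (pochhammer v n / fact n / (of_nat n + s))" for n
  proof -
    have "pochhammer s (Suc n) = s * pochhammer (s + 1) n" by (rule pochhammer_rec)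
    moreover have "pochhammer s (Suc n) = pochhammer s n * (s + of_nat n)" by (rule pochhammer_Suc)
    moreover have "pochhammer (s + 1) n \<noteq> 0" by (rule poch_nz_Re) (use hs in simp)
    moreover have "of_nat n + s \<noteq> 0"
    proof
      assume "of_nat n + s = 0"
      hence "Re (of_nat n + s) = 0" by simp
      with hs show False by simp
    qed
    ultimately have "pochhammer s n / pochhammer (s + 1) n = s / (of_nat n + s)"
      by (simp add: field_simps)
    thus ?thesis unfolding T_def c_def d_def by simp
  qed
  have "(\<lambda>n. s * (pochhammer v n / fact n / (of_nat n + s))) sums S 0"
    using summable_sums[OF sumT[of 0]] unfolding S_def T0 .
  hence "(\<lambda>n. s * (pochhammer v n / fact n / (of_nat n + s)) / s) sums (S 0 / s)" by (rule sums_divide)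
  moreover have "S 0 / s = Gamma s * Gamma (1 - v) * rGamma (s + 1 - v)"
    unfolding S0 using Gamma_plus1[OF Re_pos_notin[OF hs]] s0 by (simp add: field_simps)
  ultimately show ?thesis using s0 by simp
qed



lemma shift_aux:
  fixes X N P Q s v :: complex
  assumes "P = N + s" "Q = P + 1" "P \<noteq> 0" "Q \<noteq> 0"
  shows "s * (X / P) = (- (X * N / P) + X * (v + N) / Q) + (s + 1 - v) * (X / Q)"
proof -
  have a: "X * (v + N) / Q + (s + 1 - v) * (X / Q) = X * Q / Q"
    using assms(1,2) by (simp add: add_divide_distrib[symmetric] algebra_simps)
  have b: "X * Q / Q = X" using assms(4) by simp
  have c: "- (X * N / P) = s * (X / P) - X"
  proof -
    have "X * N / P = X * (P - s) / P" using assms(1) by simp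
    also have "\<dots> = X * P / P - X * s / P" by (simp add: algebra_simps diff_divide_distrib)
    also have "\<dots> = X - s * (X / P)" using assms(3) by simp
    finally show ?thesis by simp
  qed
  show ?thesis using a b c by (simp add: algebra_simps)
qed

lemma gauss_shift:
  fixes v s :: complex
  assumes hv: "Re v < 1" and hs: "s \<notin> \<int>\<^sub>\<le>\<^sub>0"
    and IH: "(\<lambda>n. pochhammer v n / fact n / (of_nat n + (s + 1))) sums (Gamma (s + 1) * Gamma (1 - v) * rGamma (s + 1 + 1 - v))"
  shows "(\<lambda>n. pochhammer v n / fact n / (of_nat n + s)) sums (Gamma s * Gamma (1 - v) * rGamma (s + 1 - v))"
proof -
  define c where "c n = pochhammer v n / fact n" for n
  define u where "u n = - (c n * of_nat n / (of_nat n + s))" for n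
  have s0: "s \<noteq> 0" using hs by auto
  have ns: "of_nat n + s \<noteq> 0" for n using hs plus_of_nat_eq_0_imp[of s n] by (auto simp: add.commute)
  have cS: "c (Suc n) * of_nat (Suc n) = c n * (v + of_nat n)" for n
    unfolding c_def by (simp add: pochhammer_Suc field_simps del: of_nat_Suc)
  have ulim: "u \<longlonglongrightarrow> 0"
  proof -
    have "(\<lambda>n. c n) \<longlonglongrightarrow> 0" using c_tendsto0[OF hv] unfolding c_def .
    moreover have "(\<lambda>n. of_nat n / (of_nat n + s)) \<longlonglongrightarrow> 1"
    proof -
      have "(\<lambda>n. 1 / (1 + s * inverse (of_nat n))) \<longlonglongrightarrow> 1 / (1 + s * 0)"
        by (intro tendsto_intros lim_inverse_n) simp
      moreover have "eventually (\<lambda>n. 1 / (1 + s * inverse (of_nat n)) = of_nat n / (of_nat n + s)) sequentially"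
        using eventually_gt_at_top[of "0::nat"]
      proof eventually_elim
        case (elim n)
        hence "(of_nat n :: complex) \<noteq> 0" by simp
        thus ?case using ns[of n] by (simp add: field_simps)
      qed
      ultimately show ?thesis using Lim_transform_eventually by fastforce
    qed
    ultimately have "(\<lambda>n. - (c n * (of_nat n / (of_nat n + s)))) \<longlonglongrightarrow> - (0 * 1)"
      by (intro tendsto_intros)
    thus ?thesis unfolding u_def by simp
  qed
  have tel: "(\<lambda>n. u n - u (Suc n)) sums (u 0 - 0)" by (rule telescope_sums'[OF ulim])
  have IH': "(\<lambda>n. (s + 1 - v) * (c n / (of_nat n + (s + 1)))) sums ((s + 1 - v) * (Gamma (s + 1) * Gamma (1 - v) * rGamma (s + 1 + 1 - v)))"
    using sums_mult[OF IH] unfolding c_def .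
  have eq: "s * (c n / (of_nat n + s)) = (u n - u (Suc n)) + (s + 1 - v) * (c n / (of_nat n + (s + 1)))" for n
  proof -
    have q: "of_nat n + (s + 1) = (of_nat n + s) + 1" by simp
    have q2: "of_nat (Suc n) + s = (of_nat n + s) + 1" by simp
    have nz: "(of_nat n + s) + 1 \<noteq> 0" using ns[of "Suc n"] q2 by (simp add: add_ac)
    have "u (Suc n) = - (c n * (v + of_nat n) / ((of_nat n + s) + 1))"
      unfolding u_def cS[symmetric] q2 by simp
    hence "u n - u (Suc n) = - (c n * of_nat n / (of_nat n + s)) + c n * (v + of_nat n) / ((of_nat n + s) + 1)"
      unfolding u_def by simp
    thus ?thesis unfolding q
      using shift_aux[OF refl refl ns[of n] nz, of "c n" v] by simp
  qed
  have "(\<lambda>n. s * (c n / (of_nat n + s))) sums ((u 0 - 0) + (s + 1 - v) * (Gamma (s + 1) * Gamma (1 - v) * rGamma (s + 1 + 1 - v)))"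
    unfolding eq by (intro sums_add tel IH')
  hence "(\<lambda>n. s * (c n / (of_nat n + s)) / s) sums ((s + 1 - v) * (Gamma (s + 1) * Gamma (1 - v) * rGamma (s + 1 + 1 - v)) / s)"
    by (intro sums_divide) (simp add: u_def)
  moreover have "(s + 1 - v) * (Gamma (s + 1) * Gamma (1 - v) * rGamma (s + 1 + 1 - v)) / s = Gamma s * Gamma (1 - v) * rGamma (s + 1 - v)"
  proof -
    have e: "s + 1 - v + 1 = s + 1 + 1 - v" by simp
    have A: "rGamma (s + 1 - v) = (s + 1 - v) * rGamma (s + 1 + 1 - v)"
      using rGamma_plus1[of "s + 1 - v"] unfolding e by simp
    show ?thesis unfolding A Gamma_plus1[OF hs] using s0 by (simp add: field_simps del: Gamma_plus1)
  qed
  ultimately show ?thesis using s0 unfolding c_def by simp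
qed

lemma gauss_sum:
  fixes v s :: complex
  assumes hv: "Re v < 1" and hs: "s \<notin> \<int>\<^sub>\<le>\<^sub>0"
  shows "(\<lambda>n. pochhammer v n / fact n / (of_nat n + s)) sums (Gamma s * Gamma (1 - v) * rGamma (s + 1 - v))"
proof -
  have H: "\<forall>s. s \<notin> \<int>\<^sub>\<le>\<^sub>0 \<longrightarrow> Re s + real k > 0 \<longrightarrow>
        (\<lambda>n. pochhammer v n / fact n / (of_nat n + s)) sums (Gamma s * Gamma (1 - v) * rGamma (s + 1 - v))" for k
  proof (induction k)
    case 0 thus ?case using gauss_core[OF hv] by simp
  next
    case (Suc k)
    show ?case
    proof (intro allI impI)
      fix s :: complex assume s: "s \<notin> \<int>\<^sub>\<le>\<^sub>0" "Re s + real (Suc k) > 0"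
      have s1: "s + 1 \<notin> \<int>\<^sub>\<le>\<^sub>0"
      proof
        assume "s + 1 \<in> \<int>\<^sub>\<le>\<^sub>0"
        hence "s + 1 - 1 \<in> \<int>\<^sub>\<le>\<^sub>0" by (intro nonpos_Ints_diff_Nats) auto
        with s show False by simp
      qed
      have "Re (s + 1) + real k > 0" using s by simp
      with Suc.IH s1 have "(\<lambda>n. pochhammer v n / fact n / (of_nat n + (s + 1))) sums (Gamma (s + 1) * Gamma (1 - v) * rGamma (s + 1 + 1 - v))"
        by blast
      thus "(\<lambda>n. pochhammer v n / fact n / (of_nat n + s)) sums (Gamma s * Gamma (1 - v) * rGamma (s + 1 - v))"
        by (rule gauss_shift[OF hv s(1)])
    qed
  qed
  obtain k :: nat where "real k > - Re s" using reals_Archimedean2 by blast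
  hence "Re s + real k > 0" by linarith
  with H[of k] hs show ?thesis by blast
qed



lemma rGamma_one_minus:
  fixes y :: complex assumes "y \<notin> \<int>\<^sub>\<le>\<^sub>0"
  shows "rGamma (1 - y) = Gamma y * sin (of_real pi * y) / of_real pi"
proof -
  have "rGamma y * rGamma (1 - y) = sin (of_real pi * y) / of_real pi" by (rule rGamma_reflection_complex)
  moreover have "rGamma y = inverse (Gamma y)" by (rule rGamma_inverse_Gamma)
  moreover have "Gamma y \<noteq> 0" using assms by (rule Gamma_nonzero)
  ultimately show ?thesis by (simp add: field_simps)
qed

lemma pair_sum:
  fixes v x y :: complex
  assumes xy: "x + y = v" and hx: "x \<notin> \<int>\<^sub>\<le>\<^sub>0" and hy: "y \<notin> \<int>\<^sub>\<le>\<^sub>0" and hv: "v \<notin> \<int>\<^sub>\<le>\<^sub>0"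
    and hsin: "sin (of_real pi * v) \<noteq> 0"
  shows "Gamma x * Gamma (1 - v) * rGamma (x + 1 - v) + Gamma y * Gamma (1 - v) * rGamma (y + 1 - v)
       = Gamma x * Gamma y * cos ((y - x) * of_real pi / 2) / (Gamma v * cos (v * of_real pi / 2))"
proof -
  have e1: "x + 1 - v = 1 - y" using xy by (simp add: algebra_simps)
  have e2: "y + 1 - v = 1 - x" using xy by (simp add: algebra_simps)
  have refl: "Gamma v * Gamma (1 - v) = of_real pi / sin (of_real pi * v)" by (rule Gamma_reflection_complex)
  have Gv: "Gamma v \<noteq> 0" using hv by (rule Gamma_nonzero)
  have G1: "Gamma (1 - v) = of_real pi / (sin (of_real pi * v) * Gamma v)"
    using refl Gv hsin by (simp add: field_simps mult.commute)
  have sd: "sin (of_real pi * v) = 2 * sin (v * of_real pi / 2) * cos (v * of_real pi / 2)"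
  proof -
    have "of_real pi * v = 2 * (v * of_real pi / 2)" by simp
    thus ?thesis by (metis sin_double)
  qed
  have sp: "sin (of_real pi * y) + sin (of_real pi * x) = 2 * sin (v * of_real pi / 2) * cos ((y - x) * of_real pi / 2)"
  proof -
    have a: "(of_real pi * y + of_real pi * x) / 2 = v * of_real pi / 2" using xy[symmetric] by (simp add: algebra_simps)
    have b: "(of_real pi * y - of_real pi * x) / 2 = (y - x) * of_real pi / 2" by (simp add: algebra_simps)
    show ?thesis using sin_plus_sin[of "of_real pi * y" "of_real pi * x"] unfolding a b .
  qed
  have pi0: "(of_real pi :: complex) \<noteq> 0" by simp
  have cne: "cos (v * of_real pi / 2) \<noteq> 0" using hsin sd by auto
  have sne: "sin (v * of_real pi / 2) \<noteq> 0" using hsin sd by auto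
  have "Gamma x * Gamma (1 - v) * rGamma (x + 1 - v) + Gamma y * Gamma (1 - v) * rGamma (y + 1 - v)
      = Gamma (1 - v) * Gamma x * Gamma y * (sin (of_real pi * y) + sin (of_real pi * x)) / of_real pi"
    unfolding e1 e2 rGamma_one_minus[OF hy] rGamma_one_minus[OF hx] by (simp add: field_simps)
  also have "\<dots> = Gamma x * Gamma y * cos ((y - x) * of_real pi / 2) / (Gamma v * cos (v * of_real pi / 2))"
    unfolding sp G1 sd using pi0 cne sne Gv by (simp add: field_simps)
  finally show ?thesis .
qed

lemma pf_aux:
  fixes x p q :: complex
  assumes "x - p \<noteq> 0" "x + p \<noteq> 0" "x - q \<noteq> 0" "x + q \<noteq> 0"
  shows "4 * x * (x^2 - (p^2 + q^2) / 2) / ((x - p) * (x + p) * (x - q) * (x + q))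
       = 1 / (x - p) + 1 / (x + p) + 1 / (x - q) + 1 / (x + q)"
proof -
  have gen: "\<And>A B C D :: complex. A \<noteq> 0 \<Longrightarrow> B \<noteq> 0 \<Longrightarrow> C \<noteq> 0 \<Longrightarrow> D \<noteq> 0 \<Longrightarrow>
     1 / A + 1 / B + 1 / C + 1 / D = (B * C * D + A * C * D + A * B * D + A * B * C) / (A * B * C * D)"
    by (simp add: field_simps)
  have num: "(x + p) * (x - q) * (x + q) + (x - p) * (x - q) * (x + q) + (x - p) * (x + p) * (x + q) + (x - p) * (x + p) * (x - q)
      = 4 * x * (x^2 - (p^2 + q^2) / 2)"
    by (simp add: algebra_simps power2_eq_square)
  show ?thesis unfolding gen[OF assms] num ..
qed



lemma notin_from_succ:
  fixes g :: complex assumes "1 + g \<notin> \<int>\<^sub>\<le>\<^sub>0" "g \<noteq> 0"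
  shows "g \<notin> \<int>\<^sub>\<le>\<^sub>0"
proof
  assume "g \<in> \<int>\<^sub>\<le>\<^sub>0"
  then obtain k where k: "k \<le> 0" "g = of_int k" by (auto elim: nonpos_Ints_cases)
  with assms(2) have "k < 0" by (cases "k = 0") auto
  hence "1 + g = of_int (1 + k)" "1 + k \<le> 0" using k by auto
  hence "1 + g \<in> \<int>\<^sub>\<le>\<^sub>0" by (metis nonpos_Ints_of_int)
  with assms(1) show False by simp
qed

lemma ratio_up:
  fixes x :: complex assumes "x \<notin> \<int>\<^sub>\<le>\<^sub>0"
  shows "pochhammer (1 + x) n / pochhammer x n = (x + of_nat n) / x"
proof -
  have a: "pochhammer x (Suc n) = x * pochhammer (x + 1) n" by (rule pochhammer_rec)
  have b: "pochhammer x (Suc n) = pochhammer x n * (x + of_nat n)" by (rule pochhammer_Suc)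
  have "pochhammer x n \<noteq> 0" using assms pochhammer_eq_0_imp_nonpos_Int by blast
  moreover have "x \<noteq> 0" using assms by auto
  ultimately show ?thesis using a b by (simp add: field_simps add.commute)
qed

lemma ratio_down:
  fixes x :: complex assumes "1 + x \<notin> \<int>\<^sub>\<le>\<^sub>0" "x \<noteq> 0"
  shows "pochhammer x n / pochhammer (1 + x) n = x / (x + of_nat n)"
proof -
  have a: "pochhammer x (Suc n) = x * pochhammer (1 + x) n" by (simp add: pochhammer_rec add.commute)
  have b: "pochhammer x (Suc n) = pochhammer x n * (x + of_nat n)" by (rule pochhammer_Suc)
  have "pochhammer (1 + x) n \<noteq> 0" using assms pochhammer_eq_0_imp_nonpos_Int by blast
  moreover have "x + of_nat n \<noteq> 0"
    using notin_from_succ[OF assms] plus_of_nat_eq_0_imp by blast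
  ultimately show ?thesis using a b by (simp add: field_simps)
qed

lemma prod_rearr:
  fixes A B1 B2 B3 B4 C3 C4 C5 C6 D1 D2 D3 E3 E4 E5 E6 F :: complex
  shows "(A * (B1 * (B2 * (B3 * (C3 * (C4 * (C5 * C6))))))) / (D1 * (D2 * (D3 * (E3 * (E4 * (E5 * E6)))))) * 1 / F
       = (A / F) * ((B1 / D1) * (B2 / D2) * (B3 / D3) * (C3 / E3) * (C4 / E4) * (C5 / E5) * (C6 / E6))"
  by (simp add: divide_inverse inverse_mult_distrib mult_ac)



lemma rearr2:
  fixes X V L1N L1 L2N L2 G3 G4 G5 G6 H3 H4 H5 H6 :: complex
  shows "(X / V) * (L1N / L1) * (L2N / L2) * (G3 / H3) * (G4 / H4) * (G5 / H5) * (G6 / H6)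
     = (G3 * G4 * G5 * G6 / (V * L1 * L2)) * (X * (L1N * L2N) / (H3 * H5 * H4 * H6))"
  by (simp add: divide_inverse inverse_mult_distrib mult_ac)

lemma bracket:
  fixes v a b c s N :: complex
  assumes c0: "c \<noteq> 0" and hs: "s\<^sup>2 = a\<^sup>2 + b\<^sup>2"
    and n3: "v/2 - a/(2*c) - b/(2*c) + N \<noteq> 0" and n4: "v/2 - a/(2*c) + b/(2*c) + N \<noteq> 0"
    and n5: "v/2 + a/(2*c) + b/(2*c) + N \<noteq> 0" and n6: "v/2 + a/(2*c) - b/(2*c) + N \<noteq> 0"
  shows "((v/2 + N) / (v/2)) * ((v/2 - s/(2*c) + N) / (v/2 - s/(2*c))) * ((v/2 + s/(2*c) + N) / (v/2 + s/(2*c)))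
      * ((v/2 - a/(2*c) - b/(2*c)) / (v/2 - a/(2*c) - b/(2*c) + N))
      * ((v/2 - a/(2*c) + b/(2*c)) / (v/2 - a/(2*c) + b/(2*c) + N))
      * ((v/2 + a/(2*c) + b/(2*c)) / (v/2 + a/(2*c) + b/(2*c) + N))
      * ((v/2 + a/(2*c) - b/(2*c)) / (v/2 + a/(2*c) - b/(2*c) + N))
    = ((v/2 - a/(2*c) - b/(2*c)) * (v/2 - a/(2*c) + b/(2*c)) * (v/2 + a/(2*c) + b/(2*c)) * (v/2 + a/(2*c) - b/(2*c))
        / (2 * v * (v/2 - s/(2*c)) * (v/2 + s/(2*c))))
      * (1 / (v/2 - a/(2*c) - b/(2*c) + N) + 1 / (v/2 - a/(2*c) + b/(2*c) + N)
         + 1 / (v/2 + a/(2*c) + b/(2*c) + N) + 1 / (v/2 + a/(2*c) - b/(2*c) + N))"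
proof -
  define x where "x = v/2 + N"
  define p where "p = (a + b) / (2*c)"
  define q where "q = (a - b) / (2*c)"
  define t where "t = s / (2*c)"
  have e3: "v/2 - a/(2*c) - b/(2*c) + N = x - p" unfolding x_def p_def by (simp add: add_divide_distrib algebra_simps)
  have e4: "v/2 - a/(2*c) + b/(2*c) + N = x - q" unfolding x_def q_def by (simp add: diff_divide_distrib algebra_simps)
  have e5: "v/2 + a/(2*c) + b/(2*c) + N = x + p" unfolding x_def p_def by (simp add: add_divide_distrib algebra_simps)
  have e6: "v/2 + a/(2*c) - b/(2*c) + N = x + q" unfolding x_def q_def by (simp add: diff_divide_distrib algebra_simps)
  have el1: "v/2 - s/(2*c) + N = x - t" unfolding x_def t_def by simp
  have el2: "v/2 + s/(2*c) + N = x + t" unfolding x_def t_def by simp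
  have tt: "t^2 = (p^2 + q^2) / 2"
    unfolding t_def p_def q_def using hs c0 by (simp add: power_divide power2_eq_square field_simps)
  have el: "(x - t) * (x + t) = x^2 - (p^2 + q^2) / 2"
    unfolding tt[symmetric] by (simp add: algebra_simps power2_eq_square)
  have pf: "4 * x * (x^2 - (p^2 + q^2) / 2) / ((x - p) * (x + p) * (x - q) * (x + q))
       = 1 / (x - p) + 1 / (x + p) + 1 / (x - q) + 1 / (x + q)"
    by (rule pf_aux) (use n3 n4 n5 n6 e3 e4 e5 e6 in auto)
  have fin: "G / (v / 2 * L1 * L2) * Y = G / (2 * v * L1 * L2) * S" if "Y = S / 4" for G L1 L2 S Y :: complex
  proof -
    have "G / (v / 2 * L1 * L2) * (S / 4) = (G * S) / (v / 2 * L1 * L2 * 4)" by (rule times_divide_times_eq)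
    also have "v / 2 * L1 * L2 * 4 = 2 * v * L1 * L2" by simp
    also have "(G * S) / (2 * v * L1 * L2) = G / (2 * v * L1 * L2) * S" by (rule times_divide_eq_left[symmetric])
    finally show ?thesis unfolding that .
  qed
  have Y: "x * (x^2 - (p^2 + q^2) / 2) / ((x - p) * (x + p) * (x - q) * (x + q))
        = (1 / (x - p) + 1 / (x - q) + 1 / (x + p) + 1 / (x + q)) / 4"
  proof -
    have r: "1 / (x - p) + 1 / (x - q) + 1 / (x + p) + 1 / (x + q) = 1 / (x - p) + 1 / (x + p) + 1 / (x - q) + 1 / (x + q)"
      by (simp add: add_ac)
    have "4 * x * (x^2 - (p^2 + q^2) / 2) / ((x - p) * (x + p) * (x - q) * (x + q)) / 4
        = x * (x^2 - (p^2 + q^2) / 2) / ((x - p) * (x + p) * (x - q) * (x + q))"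
      by (simp only: mult.assoc times_divide_eq_right[symmetric] nonzero_mult_div_cancel_left) simp
    thus ?thesis unfolding r pf by simp
  qed
  show ?thesis
    unfolding rearr2 e3 e4 e5 e6 el1 el2 el x_def[symmetric]
    by (rule fin[OF Y])
qed



lemma prodg_l: fixes v a b c :: complex assumes c0: "c \<noteq> 0"
  shows "(v * c - a - b) / (2 * c) * ((v * c - a + b) / (2 * c)) * ((v * c + a + b) / (2 * c)) * ((v * c + a - b) / (2 * c))
     = (v * c - a - b) * (v * c + a + b) * (v * c - a + b) * (v * c + a - b) / (16 * c^4)"
proof -
  have "\<And>A B C D X :: complex. (A / X) * (B / X) * (C / X) * (D / X) = (A * B * C * D) / (X * X * X * X)"
    by (simp add: times_divide_times_eq)
  moreover have "(2 * c) * (2 * c) * (2 * c) * (2 * c) = 16 * c^4" by (simp add: power4_eq_xxxx mult_ac)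
  ultimately show ?thesis by (simp add: mult_ac)
qed
lemma prodl_l: fixes v a b c s :: complex assumes c0: "c \<noteq> 0" and hs: "s\<^sup>2 = a\<^sup>2 + b\<^sup>2"
  shows "(v/2 - s/(2 * c)) * (v/2 + s/(2 * c)) = (v^2 * c^2 - a^2 - b^2) / (4 * c^2)"
proof -
  have "(v/2 - s/(2 * c)) * (v/2 + s/(2 * c)) = (v * c - s) * (v * c + s) / (4 * c^2)"
    using c0 by (simp add: field_simps power2_eq_square)
  also have "(v * c - s) * (v * c + s) = v^2 * c^2 - s^2" by (simp add: algebra_simps power2_eq_square)
  finally show ?thesis unfolding hs by (simp add: algebra_simps)
qed
lemma kval_l: fixes v a b c P :: complex assumes c0: "c \<noteq> 0" and v0: "v \<noteq> 0" and D0: "v^2 * c^2 - a^2 - b^2 \<noteq> 0"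
  shows "P / (16 * c^4) / (2 * v * ((v^2 * c^2 - a^2 - b^2) / (4 * c^2))) = P / (8 * (v^3 * c^4 - a\<^sup>2 * v * c\<^sup>2 - b\<^sup>2 * v * c\<^sup>2))"
proof -
  define D where "D = v^2 * c^2 - a^2 - b^2"
  have e: "v^3 * c^4 - a\<^sup>2 * v * c\<^sup>2 - b\<^sup>2 * v * c\<^sup>2 = v * c^2 * D"
    unfolding D_def by (simp add: algebra_simps power2_eq_square power3_eq_cube power4_eq_xxxx)
  have D0': "D \<noteq> 0" using D0 unfolding D_def .
  show ?thesis unfolding e D_def[symmetric] using c0 v0 D0' by (simp add: field_simps power2_eq_square power4_eq_xxxx)
qed
lemma fin_l: fixes P E A B A2 B2 C1 C2 G Cv :: complex
  shows "P / E * (A * B * C1 / (G * Cv) + A2 * B2 * C2 / (G * Cv)) = P / (E * G) * (B * A * (C1 / Cv) + B2 * A2 * (C2 / Cv))"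
  by (simp add: divide_inverse inverse_mult_distrib algebra_simps)

theorem mainTheorem8:
  fixes v a b c s :: complex
  assumes hv: "Re v < 1" and hc: "Re c > 0"
    and h1: "Re (v * c + a + b) > 0" and h2: "Re (v * c + a - b) > 0"
    and h3: "Re (v * c - a + b) > 0" and h4: "Re (v * c - a - b) > 0"
    and hs: "s\<^sup>2 = a\<^sup>2 + b\<^sup>2"
    and hcos: "cos (v * of_real pi / 2) \<noteq> 0"
    and hv2: "v / 2 \<notin> \<int>\<^sub>\<le>\<^sub>0"
    and hl1: "v/2 - s/(2 * c) \<notin> \<int>\<^sub>\<le>\<^sub>0"
    and hl2: "v/2 + s/(2 * c) \<notin> \<int>\<^sub>\<le>\<^sub>0"
    and hs3: "1 + (v/2 - a/(2 * c) - b/(2 * c)) \<notin> \<int>\<^sub>\<le>\<^sub>0"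
    and hs4: "1 + (v/2 - a/(2 * c) + b/(2 * c)) \<notin> \<int>\<^sub>\<le>\<^sub>0"
    and hs5: "1 + (v/2 + a/(2 * c) + b/(2 * c)) \<notin> \<int>\<^sub>\<le>\<^sub>0"
    and hs6: "1 + (v/2 + a/(2 * c) - b/(2 * c)) \<notin> \<int>\<^sub>\<le>\<^sub>0"
  shows "let l1 = v/2 - s/(2 * c); l2 = v/2 + s/(2 * c);
             sg3 = v/2 - a/(2 * c) - b/(2 * c); sg4 = v/2 - a/(2 * c) + b/(2 * c);
             sg5 = v/2 + a/(2 * c) + b/(2 * c); sg6 = v/2 + a/(2 * c) - b/(2 * c);
             P = (v * c - a - b) * (v * c + a + b) * (v * c - a + b) * (v * c + a - b)
         in hyp_term [v, 1 + v/2, 1 + l1, 1 + l2, sg3, sg4, sg5, sg6]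
                     [v/2, l1, l2, 1 + sg3, 1 + sg4, 1 + sg5, 1 + sg6] 1
            sums (P / (8 * (v^3 * c^4 - a\<^sup>2 * v * c\<^sup>2 - b\<^sup>2 * v * c\<^sup>2) * Gamma v)
                  * (Gamma sg5 * Gamma sg3 * (cos ((a + b) * of_real pi / (2 * c)) / cos (v * of_real pi / 2))
                   + Gamma sg6 * Gamma sg4 * (cos ((a - b) * of_real pi / (2 * c)) / cos (v * of_real pi / 2))))"
proof -
  define l1 where "l1 = v/2 - s/(2 * c)"
  define l2 where "l2 = v/2 + s/(2 * c)"
  define g3 where "g3 = v/2 - a/(2 * c) - b/(2 * c)"
  define g4 where "g4 = v/2 - a/(2 * c) + b/(2 * c)"
  define g5 where "g5 = v/2 + a/(2 * c) + b/(2 * c)"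
  define g6 where "g6 = v/2 + a/(2 * c) - b/(2 * c)"
  define P where "P = (v * c - a - b) * (v * c + a + b) * (v * c - a + b) * (v * c + a - b)"
  define K where "K = g3 * g4 * g5 * g6 / (2 * v * l1 * l2)"
  define f where "f g n = pochhammer v n / fact n / (of_nat n + g)" for g :: complex and n :: nat
  define GG where "GG g = Gamma g * Gamma (1 - v) * rGamma (g + 1 - v)" for g :: complex
  have c0: "c \<noteq> 0" using hc by auto
  have Revc: "Re (v * c) > 0" using h1 h4 by simp
  have vnp: "v \<notin> \<int>\<^sub>\<le>\<^sub>0"
  proof
    assume "v \<in> \<int>\<^sub>\<le>\<^sub>0"
    then obtain k where k: "k \<le> 0" "v = of_int k" by (auto elim: nonpos_Ints_cases)
    hence "Re (v * c) = of_int k * Re c" by simp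
    also have "\<dots> \<le> 0" using k hc by (simp add: mult_nonpos_nonneg)
    finally show False using Revc by simp
  qed
  have v0: "v \<noteq> 0" using vnp by auto
  have hsin: "sin (of_real pi * v) \<noteq> 0"
  proof
    assume "sin (of_real pi * v) = 0"
    then obtain n :: int where n: "of_real pi * v = of_real (of_int n * pi)" by (auto simp: sin_eq_0)
    hence "v = of_int n" by (simp add: field_simps)
    hence "Re v = of_int n" by simp
    with hv have "n \<le> 0" by simp
    with \<open>v = of_int n\<close> have "v \<in> \<int>\<^sub>\<le>\<^sub>0" by (simp add: nonpos_Ints_of_int)
    with vnp show False by simp
  qed
  have gexp: "g3 = (v * c - a - b) / (2 * c)" "g4 = (v * c - a + b) / (2 * c)"
             "g5 = (v * c + a + b) / (2 * c)" "g6 = (v * c + a - b) / (2 * c)"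
    unfolding g3_def g4_def g5_def g6_def using c0 by (simp_all add: field_simps)
  have g30: "g3 \<noteq> 0"
  proof
    assume "g3 = 0"
    hence z: "v * c - a - b = 0" using gexp(1) c0 by simp
    have "Re (v * c - a - b) = Re 0" by (simp only: z)
    with h4 show False by simp
  qed
  have g40: "g4 \<noteq> 0"
  proof
    assume "g4 = 0"
    hence z: "v * c - a + b = 0" using gexp(2) c0 by simp
    have "Re (v * c - a + b) = Re 0" by (simp only: z)
    with h3 show False by simp
  qed
  have g50: "g5 \<noteq> 0"
  proof
    assume "g5 = 0"
    hence z: "v * c + a + b = 0" using gexp(3) c0 by simp
    have "Re (v * c + a + b) = Re 0" by (simp only: z)
    with h1 show False by simp
  qed
  have g60: "g6 \<noteq> 0"
  proof
    assume "g6 = 0"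
    hence z: "v * c + a - b = 0" using gexp(4) c0 by simp
    have "Re (v * c + a - b) = Re 0" by (simp only: z)
    with h2 show False by simp
  qed
  have g3n: "g3 \<notin> \<int>\<^sub>\<le>\<^sub>0" using notin_from_succ[OF hs3[folded g3_def] g30] .
  have g4n: "g4 \<notin> \<int>\<^sub>\<le>\<^sub>0" using notin_from_succ[OF hs4[folded g4_def] g40] .
  have g5n: "g5 \<notin> \<int>\<^sub>\<le>\<^sub>0" using notin_from_succ[OF hs5[folded g5_def] g50] .
  have g6n: "g6 \<notin> \<int>\<^sub>\<le>\<^sub>0" using notin_from_succ[OF hs6[folded g6_def] g60] .
  have gN: "g + of_nat n \<noteq> 0" if "g \<notin> \<int>\<^sub>\<le>\<^sub>0" for g :: complex and n
    using that plus_of_nat_eq_0_imp by blast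
  have hterm: "hyp_term [v, 1 + v/2, 1 + l1, 1 + l2, g3, g4, g5, g6]
                     [v/2, l1, l2, 1 + g3, 1 + g4, 1 + g5, 1 + g6] 1 n = K * (f g3 n + f g4 n + f g5 n + f g6 n)" for n
  proof -
    have "hyp_term [v, 1 + v/2, 1 + l1, 1 + l2, g3, g4, g5, g6]
                     [v/2, l1, l2, 1 + g3, 1 + g4, 1 + g5, 1 + g6] 1 n
       = (pochhammer v n * (pochhammer (1 + v/2) n * (pochhammer (1 + l1) n * (pochhammer (1 + l2) n *
           (pochhammer g3 n * (pochhammer g4 n * (pochhammer g5 n * pochhammer g6 n)))))))
         / (pochhammer (v/2) n * (pochhammer l1 n * (pochhammer l2 n * (pochhammer (1 + g3) n *
           (pochhammer (1 + g4) n * (pochhammer (1 + g5) n * pochhammer (1 + g6) n)))))) * 1 / fact n"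
      unfolding hyp_term_def by simp
    also have "\<dots> = (pochhammer v n / fact n) * (((v/2 + of_nat n) / (v/2)) * ((l1 + of_nat n) / l1) * ((l2 + of_nat n) / l2)
        * (g3 / (g3 + of_nat n)) * (g4 / (g4 + of_nat n)) * (g5 / (g5 + of_nat n)) * (g6 / (g6 + of_nat n)))"
      unfolding prod_rearr ratio_up[OF hv2] ratio_up[OF hl1[folded l1_def]] ratio_up[OF hl2[folded l2_def]]
        ratio_down[OF hs3[folded g3_def] g30] ratio_down[OF hs4[folded g4_def] g40]
        ratio_down[OF hs5[folded g5_def] g50] ratio_down[OF hs6[folded g6_def] g60] ..
    also have "((v/2 + of_nat n) / (v/2)) * ((l1 + of_nat n) / l1) * ((l2 + of_nat n) / l2)
        * (g3 / (g3 + of_nat n)) * (g4 / (g4 + of_nat n)) * (g5 / (g5 + of_nat n)) * (g6 / (g6 + of_nat n))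
        = K * (1 / (g3 + of_nat n) + 1 / (g4 + of_nat n) + 1 / (g5 + of_nat n) + 1 / (g6 + of_nat n))"
      unfolding K_def l1_def l2_def g3_def g4_def g5_def g6_def
      by (rule bracket[OF c0 hs]) (use gN[OF g3n] gN[OF g4n] gN[OF g5n] gN[OF g6n] in
           \<open>simp_all add: g3_def g4_def g5_def g6_def\<close>)
    finally show ?thesis unfolding f_def by (simp add: algebra_simps add_ac)
  qed
  have sumsf: "(\<lambda>n. f g n) sums GG g" if "g \<notin> \<int>\<^sub>\<le>\<^sub>0" for g
    using gauss_sum[OF hv that] unfolding f_def GG_def .
  have S: "(\<lambda>n. K * (f g3 n + f g4 n + f g5 n + f g6 n)) sums (K * (GG g3 + GG g4 + GG g5 + GG g6))"
    by (intro sums_mult sums_add sumsf g3n g4n g5n g6n)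
  have pair1: "GG g3 + GG g5 = Gamma g3 * Gamma g5 * cos ((a + b) * of_real pi / (2 * c)) / (Gamma v * cos (v * of_real pi / 2))"
  proof -
    have "g3 + g5 = v" unfolding g3_def g5_def by simp
    from pair_sum[OF this g3n g5n vnp hsin]
    have "GG g3 + GG g5 = Gamma g3 * Gamma g5 * cos ((g5 - g3) * of_real pi / 2) / (Gamma v * cos (v * of_real pi / 2))"
      unfolding GG_def .
    moreover have "(g5 - g3) * of_real pi / 2 = (a + b) * of_real pi / (2 * c)"
      unfolding g3_def g5_def using c0 by (simp add: field_simps)
    ultimately show ?thesis by simp
  qed
  have pair2: "GG g4 + GG g6 = Gamma g4 * Gamma g6 * cos ((a - b) * of_real pi / (2 * c)) / (Gamma v * cos (v * of_real pi / 2))"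
  proof -
    have "g4 + g6 = v" unfolding g4_def g6_def by simp
    from pair_sum[OF this g4n g6n vnp hsin]
    have "GG g4 + GG g6 = Gamma g4 * Gamma g6 * cos ((g6 - g4) * of_real pi / 2) / (Gamma v * cos (v * of_real pi / 2))"
      unfolding GG_def .
    moreover have "(g6 - g4) * of_real pi / 2 = (a - b) * of_real pi / (2 * c)"
      unfolding g4_def g6_def using c0 by (simp add: field_simps)
    ultimately show ?thesis by simp
  qed
  have l10: "l1 \<noteq> 0" using hl1 unfolding l1_def[symmetric] by auto
  have l20: "l2 \<noteq> 0" using hl2 unfolding l2_def[symmetric] by auto
  have prodg: "g3 * g4 * g5 * g6 = P / (16 * c^4)"
    unfolding gexp P_def by (rule prodg_l[OF c0])
  have prodl: "l1 * l2 = (v^2 * c^2 - a^2 - b^2) / (4 * c^2)"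
    unfolding l1_def l2_def by (rule prodl_l[OF c0 hs])
  have D0: "v^2 * c^2 - a^2 - b^2 \<noteq> 0" using prodl l10 l20 c0 by auto
  have Kval: "K = P / (8 * (v^3 * c^4 - a\<^sup>2 * v * c\<^sup>2 - b\<^sup>2 * v * c\<^sup>2))"
  proof -
    have "K = g3 * g4 * g5 * g6 / (2 * v * (l1 * l2))" unfolding K_def by (simp add: mult.assoc)
    also have "\<dots> = P / (16 * c^4) / (2 * v * ((v^2 * c^2 - a^2 - b^2) / (4 * c^2)))" unfolding prodg prodl ..
    also have "\<dots> = P / (8 * (v^3 * c^4 - a\<^sup>2 * v * c\<^sup>2 - b\<^sup>2 * v * c\<^sup>2))"
      by (rule kval_l[OF c0 v0 D0])
    finally show ?thesis .
  qed
  have hfun: "hyp_term [v, 1 + v/2, 1 + l1, 1 + l2, g3, g4, g5, g6]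
                     [v/2, l1, l2, 1 + g3, 1 + g4, 1 + g5, 1 + g6] 1 = (\<lambda>n. K * (f g3 n + f g4 n + f g5 n + f g6 n))"
    by (rule ext) (rule hterm)
  have final: "K * (GG g3 + GG g4 + GG g5 + GG g6)
     = P / (8 * (v^3 * c^4 - a\<^sup>2 * v * c\<^sup>2 - b\<^sup>2 * v * c\<^sup>2) * Gamma v)
                  * (Gamma g5 * Gamma g3 * (cos ((a + b) * of_real pi / (2 * c)) / cos (v * of_real pi / 2))
                   + Gamma g6 * Gamma g4 * (cos ((a - b) * of_real pi / (2 * c)) / cos (v * of_real pi / 2)))"
  proof -
    have "GG g3 + GG g4 + GG g5 + GG g6 = (GG g3 + GG g5) + (GG g4 + GG g6)" by (simp add: add_ac)
    thus ?thesis unfolding pair1 pair2 Kval by (simp only: fin_l)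
  qed
  show ?thesis
    unfolding Let_def l1_def[symmetric] l2_def[symmetric] g3_def[symmetric] g4_def[symmetric]
      g5_def[symmetric] g6_def[symmetric] P_def[symmetric] hfun final[symmetric]
    by (rule S)
qed


end
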